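(* For all $n\in\mathbb N$ the following hold in the $q$-shuffle algebra $\mathbb V$: $$W_{-n}=\sum_{i=0}^n(-1)^iq^i(xC_i)\star\tilde G_{n-i}=\sum_{i=0}^n(-1)^iq^{-i}\tilde G_{n-i}\star(xC_i),$$ $$W_{n+1}=\sum_{i=0}^n(-1)^iq^i\tilde G_{n-i}\star(C_iy)=\sum_{i=0}^n(-1)^iq^{-i}(C_iy)\star\tilde G_{n-i}.$$ Here $xC_i$ and $C_iy$ are concatenation products.
   Context: Let $\mathbb F$ be a field and let $q\in\mathbb F$ be nonzero and not a root of unity. Let $[m]_q=(q^m-q^{-m})/(q-q^{-1})$. Let $\mathbb V$ be the free associative $\mathbb F$-algebra on noncommuting $x,y$, with basis the words (including $1$). Juxtaposition denotes concatenation. Set $\langle x,x\rangle=\langle y,y\rangle=2$ and $\langle x,y\rangle=\langle y,x\rangle=-2$. The $q$-shuffle product $\star$ is the bilinear product determined as follows: - $1\star v=v\star 1=v$; - for nontrivial words $u=u_1\cdots u_r$ and $v=v_1\cdots v_s$, $$u\star v=u_1((u_2\cdots u_r)\star v)+v_1(u\star(v_2\cdots v_s))q^{\langle u_1,v_1\rangle+\cdots+\langle u_r,v_1\rangle}.$$ This makes $\mathbb V$ an associative algebra, the $q$-shuffle algebra. For $k\in\mathbb N$: - $W_{-k}=xyx\cdots x$ is the alternating word of length $2k+1$ beginning and ending with $x$; - $W_{k+1}=yxy\cdots y$ is the alternating word of length $2k+1$ beginning and ending with $y$; - $\tilde G_k=xyxy\cdots xy$ is the word of length $2k$, with $\tilde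 G_0=1$. Let $\overline x=1$ and $\overline y=-1$. A word $v_1\cdots v_m$ is Catalan if $\overline v_1+\cdots+\overline v_i\ge0$ for $1\le i\le m-1$ and $\overline v_1+\cdots+\overline v_m=0$. For $n\in\mathbb N$, $$C_n=\sum v_1\cdots v_{2n}\,[1]_q[1+\overline v_1]_q\cdots[1+\overline v_1+\cdots+\overline v_{2n}]_q,$$ where the sum is over all Catalan words of length $2n$ (so $C_0=1$). *)

theory Defs
  imports Complex_Main "HOL-Library.Poly_Mapping"
begin

datatype letter = X | Y

type_synonym word = "letter list"

type_synonym 'a vV = "word \<Rightarrow>\<^sub>0 'a"

definition wd :: "word \<Rightarrow> 'a::field vV" where
  "wd w = Poly_Mapping.single w 1"

definition scal :: "'a::field \<Rightarrow> 'a vV \<Rightarrow> 'a vV" where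
  "scal c f = Poly_Mapping.map (\<lambda>a. c * a) f"

definition lin_ext :: "(word \<Rightarrow> 'a::field vV) \<Rightarrow> 'a vV \<Rightarrow> 'a vV" where
  "lin_ext F f = (\<Sum>u\<in>Poly_Mapping.keys f. scal (Poly_Mapping.lookup f u) (F u))"

definition cat :: "'a::field vV \<Rightarrow> 'a vV \<Rightarrow> 'a vV" where
  "cat f g = lin_ext (\<lambda>u. lin_ext (\<lambda>v. wd (u @ v)) g) f"

definition pref :: "letter \<Rightarrow> 'a::field vV \<Rightarrow> 'a vV" where
  "pref a f = cat (wd [a]) f"

definition pairing :: "letter \<Rightarrow> letter \<Rightarrow> int" where
  "pairing a b = (if a = b then 2 else -2)"

fun qsh :: "'a::field \<Rightarrow> word \<Rightarrow> word \<Rightarrow> 'a vV" where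
  "qsh q [] v = wd v"
| "qsh q u [] = wd u"
| "qsh q (a # u) (b # v) =
     pref a (qsh q u (b # v))
     + scal (q powi (\<Sum>c\<leftarrow>a # u. pairing c b)) (pref b (qsh q (a # u) v))"

definition star :: "'a::field \<Rightarrow> 'a vV \<Rightarrow> 'a vV \<Rightarrow> 'a vV" where
  "star q f g = lin_ext (\<lambda>u. lin_ext (\<lambda>v. qsh q u v) g) f"

fun alt :: "letter \<Rightarrow> nat \<Rightarrow> word" where
  "alt a 0 = []"
| "alt a (Suc m) = a # alt (if a = X then Y else X) m"

definition Wneg :: "nat \<Rightarrow> 'a::field vV" where   \<comment> \<open>W_{-k}\<close>
  "Wneg k = wd (alt X (2 * k + 1))"

definition Wpos :: "nat \<Rightarrow> 'a::field vV" where   \<comment> \<open>W_{k+1}\<close>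
  "Wpos k = wd (alt Y (2 * k + 1))"

definition Gt :: "nat \<Rightarrow> 'a::field vV" where
  "Gt k = wd (alt X (2 * k))"

definition qint :: "'a::field \<Rightarrow> int \<Rightarrow> 'a" where
  "qint q m = (q powi m - q powi (- m)) / (q - inverse q)"

definition lval :: "letter \<Rightarrow> int" where
  "lval a = (if a = X then 1 else -1)"

definition catalan_word :: "word \<Rightarrow> bool" where
  "catalan_word w \<longleftrightarrow>
     (\<forall>i. 1 \<le> i \<and> i \<le> length w - 1 \<longrightarrow> (\<Sum>j<i. lval (w ! j)) \<ge> 0)
     \<and> (\<Sum>j<length w. lval (w ! j)) = 0"

definition Cat :: "'a::field \<Rightarrow> nat \<Rightarrow> 'a vV" where
  "Cat q n = (\<Sum>w\<in>{w. length w = 2 * n \<and> catalan_word w}.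
      scal (\<Prod>i\<le>2 * n. qint q (1 + (\<Sum>j<i. lval (w ! j)))) (wd w))"

end

theory Submission
  imports Defs
begin


abbreviation lk :: "('b \<Rightarrow>\<^sub>0 'c::zero) \<Rightarrow> 'b \<Rightarrow> 'c" where "lk \<equiv> Poly_Mapping.lookup"
abbreviation ks :: "('b \<Rightarrow>\<^sub>0 'c::zero) \<Rightarrow> 'b set" where "ks \<equiv> Poly_Mapping.keys"


lemma lookup_scal [simp]: "lk (scal c f) w = c * lk f w"
  unfolding scal_def by transfer (simp add: when_def)

lemma lookup_wd: "lk (wd w) v = (if v = w then 1 else 0)"
  unfolding wd_def by (simp add: lookup_single when_def)

lemma keys_wd [simp]: "ks (wd w :: 'a::field vV) = {w}"
  unfolding wd_def by simp

lemma scal_0 [simp]: "scal 0 f = 0" "scal c 0 = 0"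
  by (rule poly_mapping_eqI, simp)+

lemma scal_1 [simp]: "scal 1 f = f"
  by (rule poly_mapping_eqI, simp)

lemma scal_add: "scal c (f + g) = scal c f + scal c g"
  by (rule poly_mapping_eqI, simp add: lookup_add algebra_simps)

lemma scal_sum: "scal c (sum f S) = (\<Sum>i\<in>S. scal c (f i))"
  by (induction S rule: infinite_finite_induct) (simp_all add: scal_add)

lemma scal_scal [simp]: "scal c (scal d f) = scal (c * d) f"
  by (rule poly_mapping_eqI, simp)

lemma lin_ext_superset:
  assumes "finite S" "ks f \<subseteq> S"
  shows "lin_ext F f = (\<Sum>u\<in>S. scal (lk f u) (F u))"
  unfolding lin_ext_def
  by (rule sum.mono_neutral_left) (use assms in \<open>auto simp: in_keys_iff\<close>)

lemma lookup_lin_ext: "lk (lin_ext F f) w = (\<Sum>u\<in>ks f. lk f u * lk (F u) w)"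
  unfolding lin_ext_def by (simp add: lookup_sum)

lemma lin_ext_add: "lin_ext F (f + g) = lin_ext F f + lin_ext F g"
proof -
  let ?S = "ks f \<union> ks g"
  have "ks (f+g) \<subseteq> ?S" by (simp add: keys_add)
  then show ?thesis
    by (simp add: lin_ext_superset[of ?S] lookup_add sum.distrib[symmetric])
       (rule sum.cong, simp, rule poly_mapping_eqI, simp add: lookup_add algebra_simps)
qed

lemma keys_scal_sub: "ks (scal c f) \<subseteq> ks f"
  by (auto simp: in_keys_iff)

lemma lin_ext_scal: "lin_ext F (scal c f) = scal c (lin_ext F f)"
proof -
  have "lin_ext F (scal c f) = (\<Sum>u\<in>ks f. scal (lk (scal c f) u) (F u))"
    by (rule lin_ext_superset[OF finite_keys keys_scal_sub])
  then show ?thesis by (simp add: lin_ext_def scal_sum)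
qed

lemma lin_ext_zero [simp]: "lin_ext F 0 = 0"
  by (simp add: lin_ext_def)

lemma lin_ext_sum: "lin_ext F (sum g S) = (\<Sum>i\<in>S. lin_ext F (g i))"
  by (induction S rule: infinite_finite_induct) (simp_all add: lin_ext_add)

lemma lin_ext_minus: "lin_ext F (f - g) = lin_ext F f - lin_ext F g"
  by (metis add_diff_cancel diff_add_cancel lin_ext_add)

lemma lin_ext_wd [simp]: "lin_ext F (wd w) = F w"
  by (simp add: lin_ext_def wd_def)

lemma lin_ext_cong: "(\<And>u. u \<in> ks f \<Longrightarrow> F u = G u) \<Longrightarrow> lin_ext F f = lin_ext G f"
  by (simp add: lin_ext_def)

lemma lin_ext_F_add: "lin_ext (\<lambda>u. F u + G u) f = lin_ext F f + lin_ext G f"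
  by (simp add: lin_ext_def scal_add sum.distrib)

lemma lin_ext_F_scal: "lin_ext (\<lambda>u. scal c (F u)) f = scal c (lin_ext F f)"
  by (simp add: lin_ext_def scal_sum mult.commute)

lemma lin_ext_F_zero [simp]: "lin_ext (\<lambda>u. 0) f = 0"
  by (simp add: lin_ext_def)

lemma lin_ext_wd_id [simp]: "lin_ext wd f = f"
  by (rule poly_mapping_eqI) (auto simp: lookup_lin_ext lookup_wd in_keys_iff if_distrib cong: if_cong)



lemma sum_keys_delta:
  fixes f :: "'b \<Rightarrow>\<^sub>0 'a::field"
  shows "(\<Sum>u\<in>ks f. lk f u * (if u = w then c else 0)) = lk f w * c"
proof -
  have "(\<Sum>u\<in>ks f. lk f u * (if u = w then c else 0)) = (\<Sum>u\<in>ks f. if w = u then lk f u * c else 0)"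
    by (rule sum.cong) auto
  also have "\<dots> = lk f w * c" by (simp add: sum.delta in_keys_iff)
  finally show ?thesis .
qed

lemma lin_ext_lin_ext: "lin_ext F (lin_ext G f) = lin_ext (\<lambda>u. lin_ext F (G u)) f"
  by (simp add: lin_ext_def[of G] lin_ext_sum lin_ext_scal) (simp add: lin_ext_def)

definition dw :: "letter \<Rightarrow> word \<Rightarrow> 'a::field vV" where
  "dw a u = (case u of [] \<Rightarrow> 0 | b # u' \<Rightarrow> if b = a then wd u' else 0)"

definition dd :: "letter \<Rightarrow> 'a::field vV \<Rightarrow> 'a vV" where
  "dd a f = lin_ext (dw a) f"

lemma lookup_dw: "lk (dw a u :: 'a::field vV) w = (if u = a # w then 1 else 0)"
  by (auto simp: dw_def lookup_wd split: list.split)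

lemma lookup_dd [simp]: "lk (dd a f) w = lk f (a # w)"
  unfolding dd_def lookup_lin_ext lookup_dw by (simp add: sum_keys_delta)

lemma dd_add [simp]: "dd a (f + g) = dd a f + dd a g"
  by (simp add: dd_def lin_ext_add)
lemma dd_scal [simp]: "dd a (scal c f) = scal c (dd a f)"
  by (simp add: dd_def lin_ext_scal)
lemma dd_zero [simp]: "dd a 0 = 0"
  by (simp add: dd_def)
lemma dd_sum [simp]: "dd a (sum f S) = (\<Sum>i\<in>S. dd a (f i))"
  by (simp add: dd_def lin_ext_sum)
lemma dd_minus [simp]: "dd a (f - g) = dd a f - dd a g"
  by (simp add: dd_def lin_ext_minus)
lemma dd_wd_Nil [simp]: "dd a (wd [] :: 'a::field vV) = 0"
  by (simp add: dd_def dw_def)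
lemma dd_wd_Cons [simp]: "dd a (wd (b # w) :: 'a::field vV) = (if b = a then wd w else 0)"
  by (simp add: dd_def dw_def)

lemma dd_lin_ext: "dd a (lin_ext F f) = lin_ext (\<lambda>u. dd a (F u)) f"
  by (simp add: lin_ext_def)

lemma vV_ext:
  fixes f g :: "'a::field vV"
  assumes "lk f [] = lk g []" "dd X f = dd X g" "dd Y f = dd Y g"
  shows "f = g"
proof (rule poly_mapping_eqI)
  fix w show "lk f w = lk g w"
  proof (cases w)
    case Nil then show ?thesis using assms by simp
  next
    case (Cons a w')
    have "lk (dd a f) w' = lk (dd a g) w'" using assms by (cases a) auto
    then show ?thesis using Cons by simp
  qed
qed

lemma lookup_sum_simp [simp]: "lk (sum f S) w = (\<Sum>i\<in>S. lk (f i) w)"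
  by (simp add: lookup_sum)
lemma lookup_add_simp [simp]: "lk (f + g) w = lk f w + lk g w"
  by (simp add: lookup_add)
lemma lookup_minus_simp [simp]: "lk (f - g) w = lk f w - lk (g::'a::field vV) w"
  by (simp add: lookup_minus)

subsection \<open>Concatenation\<close>

lemma cat_wd_wd [simp]: "cat (wd u) (wd v) = (wd (u @ v) :: 'a::field vV)"
  by (simp add: cat_def)

lemma lookup_cat_left: "lk (cat (wd [a]) f :: 'a::field vV) w = (case w of [] \<Rightarrow> 0 | b # w' \<Rightarrow> if b = a then lk f w' else 0)"
proof -
  have "lk (cat (wd [a]) f) w = (\<Sum>v\<in>ks f. lk f v * (if v = tl w then (if w \<noteq> [] \<and> hd w = a then 1 else 0) else 0))"
  proof -
    have "lk (cat (wd [a]) f) w = (\<Sum>v\<in>ks f. lk f v * (if w = a # v then 1 else 0))"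
      by (simp add: cat_def lookup_lin_ext lookup_wd)
    also have "\<dots> = (\<Sum>v\<in>ks f. lk f v * (if v = tl w then (if w \<noteq> [] \<and> hd w = a then 1 else 0) else 0))"
      by (rule sum.cong) (cases w, auto)
    finally show ?thesis .
  qed
  also have "\<dots> = lk f (tl w) * (if w \<noteq> [] \<and> hd w = a then 1 else 0)" by (rule sum_keys_delta)
  finally show ?thesis by (cases w) auto
qed

lemma lookup_cat_right: "lk (cat f (wd [b]) :: 'a::field vV) w = (if w \<noteq> [] \<and> last w = b then lk f (butlast w) else 0)"
proof -
  have "lk (cat f (wd [b])) w = (\<Sum>u\<in>ks f. lk f u * (if u = butlast w then (if w \<noteq> [] \<and> last w = b then 1 else 0) else 0))"
  proof -
    have "lk (cat f (wd [b])) w = (\<Sum>u\<in>ks f. lk f u * (if w = u @ [b] then 1 else 0))"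
      by (simp add: cat_def lookup_lin_ext lookup_wd)
    also have "\<dots> = (\<Sum>u\<in>ks f. lk f u * (if u = butlast w then (if w \<noteq> [] \<and> last w = b then 1 else 0) else 0))"
      by (rule sum.cong) (cases w rule: rev_cases, auto)
    finally show ?thesis .
  qed
  also have "\<dots> = lk f (butlast w) * (if w \<noteq> [] \<and> last w = b then 1 else 0)" by (rule sum_keys_delta)
  finally show ?thesis by auto
qed

lemma dd_cat_left [simp]: "dd a (cat (wd [b]) f :: 'a::field vV) = (if b = a then f else 0)"
  by (rule poly_mapping_eqI) (simp add: lookup_cat_left)

lemma dd_pref [simp]: "dd a (pref b f :: 'a::field vV) = (if b = a then f else 0)"
  by (simp add: pref_def)

lemma dd_cat_right: "dd a (cat f (wd [b]) :: 'a::field vV) = cat (dd a f) (wd [b]) + (if a = b then scal (lk f []) (wd []) else 0)"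
  by (rule poly_mapping_eqI) (auto simp: lookup_cat_right lookup_wd)

lemma cat_scal_left: "cat (scal c f) g = scal c (cat f g)"
  by (simp add: cat_def lin_ext_scal)
lemma cat_zero_left [simp]: "cat 0 g = 0"
  by (simp add: cat_def)
lemma pref_scal: "pref a (scal c f) = scal c (pref a f)"
  by (simp add: pref_def cat_def lin_ext_scal lin_ext_F_scal)

subsection \<open>q-shuffle\<close>

definition pp :: "word \<Rightarrow> letter \<Rightarrow> int" where
  "pp u a = (\<Sum>c\<leftarrow>u. pairing c a)"

lemma qsh_Nil2 [simp]: "qsh q u [] = wd u"
  by (cases u) auto

lemma star_wd_wd [simp]: "star q (wd u) (wd v) = qsh q u v"
  by (simp add: star_def)

lemma star_Nil_right [simp]: "star q f (wd []) = f"
  by (simp add: star_def)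
lemma qsh_Nil1: "qsh q [] = wd"
  by (rule ext) simp
lemma star_Nil_left [simp]: "star q (wd []) g = g"
  by (simp add: star_def qsh_Nil1)

lemma star_add_left: "star q (f + g) h = star q f h + star q g h"
  by (simp add: star_def lin_ext_add)
lemma star_scal_left [simp]: "star q (scal c f) g = scal c (star q f g)"
  by (simp add: star_def lin_ext_scal)
lemma star_zero_left [simp]: "star q 0 g = 0"
  by (simp add: star_def)
lemma star_add_right: "star q f (g + h) = star q f g + star q f h"
  by (simp add: star_def lin_ext_add lin_ext_F_add)
lemma star_scal_right [simp]: "star q f (scal c g) = scal c (star q f g)"
  by (simp add: star_def lin_ext_scal lin_ext_F_scal)
lemma star_zero_right [simp]: "star q f 0 = 0"
  by (simp add: star_def)

lemma dd_qsh: "dd a (qsh q u v) =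
   (case u of [] \<Rightarrow> 0 | b # u' \<Rightarrow> if b = a then qsh q u' v else 0)
   + scal (q powi pp u a) (case v of [] \<Rightarrow> 0 | b # v' \<Rightarrow> if b = a then qsh q u v' else 0)"
proof (cases u)
  case Nil then show ?thesis by (cases v) (auto simp: pp_def)
next
  case (Cons b u')
  then show ?thesis by (cases v) (auto simp: pp_def)
qed

lemma star_leibniz:
  assumes "\<And>u. u \<in> ks f \<Longrightarrow> pp u a = k"
  shows "dd a (star q f g) = star q (dd a f) g + scal (q powi k) (star q f (dd a g))"
proof -
  have "dd a (star q f g) = lin_ext (\<lambda>u. lin_ext (\<lambda>v. dd a (qsh q u v)) g) f"
    by (simp add: star_def dd_lin_ext)
  also have "\<dots> = lin_ext (\<lambda>u. lin_ext (\<lambda>v. (case u of [] \<Rightarrow> 0 | b # u' \<Rightarrow> if b = a then qsh q u' v else 0)) g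
       + scal (q powi pp u a) (lin_ext (\<lambda>v. (case v of [] \<Rightarrow> 0 | b # v' \<Rightarrow> if b = a then qsh q u v' else 0)) g)) f"
    by (simp add: dd_qsh lin_ext_F_add lin_ext_F_scal)
  also have "\<dots> = lin_ext (\<lambda>u. lin_ext (\<lambda>v. (case u of [] \<Rightarrow> 0 | b # u' \<Rightarrow> if b = a then qsh q u' v else 0)) g) f
       + scal (q powi k) (lin_ext (\<lambda>u. lin_ext (\<lambda>v. (case v of [] \<Rightarrow> 0 | b # v' \<Rightarrow> if b = a then qsh q u v' else 0)) g) f)"
    by (simp add: lin_ext_F_add lin_ext_F_scal[symmetric] assms cong: lin_ext_cong)
  also have "lin_ext (\<lambda>u. lin_ext (\<lambda>v. (case u of [] \<Rightarrow> 0 | b # u' \<Rightarrow> if b = a then qsh q u' v else 0)) g) f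
      = star q (dd a f) g"
    unfolding star_def dd_def lin_ext_lin_ext
    by (rule lin_ext_cong) (auto simp: dw_def split: list.split)
  also have "(\<lambda>u. lin_ext (\<lambda>v. (case v of [] \<Rightarrow> 0 | b # v' \<Rightarrow> if b = a then qsh q u v' else 0)) g)
      = (\<lambda>u. lin_ext (\<lambda>v. qsh q u v) (dd a g))"
    unfolding dd_def lin_ext_lin_ext
    by (rule ext, rule lin_ext_cong) (auto simp: dw_def split: list.split)
  finally show ?thesis by (simp add: star_def)
qed

lemma lookup_qsh_Nil: "lk (qsh q u v) [] = (if u = [] \<and> v = [] then 1 else 0)"
proof (cases u)
  case Nil then show ?thesis by (simp add: lookup_wd)
next
  case (Cons b u')
  then show ?thesis by (cases v) (auto simp: lookup_wd pref_def lookup_cat_left)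
qed

lemma lookup_star_Nil: "lk (star q f g) [] = lk f [] * lk g []"
proof -
  have "lk (star q f g) [] = (\<Sum>u\<in>ks f. lk f u * (\<Sum>v\<in>ks g. lk g v * (if u = [] \<and> v = [] then 1 else 0)))"
    by (simp add: star_def lookup_lin_ext lookup_qsh_Nil)
  also have "\<dots> = (\<Sum>u\<in>ks f. lk f u * (if u = [] then lk g [] else 0))"
  proof (rule sum.cong, simp)
    fix u :: word
    have "(\<Sum>v\<in>ks g. lk g v * (if u = [] \<and> v = [] then 1 else 0)) = (\<Sum>v\<in>ks g. lk g v * (if v = [] then (if u = [] then 1 else 0) else 0))"
      by (rule sum.cong) auto
    also have "\<dots> = (if u = [] then lk g [] else 0)" by (simp add: sum_keys_delta)
    finally show "lk f u * (\<Sum>v\<in>ks g. lk g v * (if u = [] \<and> v = [] then 1 else 0)) = lk f u * (if u = [] then lk g [] else 0)" by simp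
  qed
  also have "\<dots> = lk f [] * lk g []" by (simp add: sum_keys_delta)
  finally show ?thesis .
qed

lemma star_sum_left: "star q (sum f S) g = (\<Sum>i\<in>S. star q (f i) g)"
  by (induction S rule: infinite_finite_induct) (simp_all add: star_add_left)
lemma star_sum_right: "star q g (sum f S) = (\<Sum>i\<in>S. star q g (f i))"
  by (induction S rule: infinite_finite_induct) (simp_all add: star_add_right)



lemma UNIV_letter: "(UNIV :: letter set) = {X, Y}"
  using letter.exhaust by auto

lemma finite_words: "finite {w :: word. length w = m}"
proof -
  have "{w :: word. length w = m} = {w. set w \<subseteq> UNIV \<and> length w = m}" by simp
  then show ?thesis using finite_lists_length_eq[of "UNIV :: letter set" m] by (simp add: UNIV_letter)
qed

lemma lookup_sum_wd:
  assumes "finite S"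
  shows "lk (\<Sum>w\<in>S. scal (c w) (wd w) :: 'a::field vV) v = (if v \<in> S then c v else 0)"
proof -
  have "lk (\<Sum>w\<in>S. scal (c w) (wd w) :: 'a::field vV) v = (\<Sum>w\<in>S. if v = w then c w else 0)"
    by (simp add: lookup_wd) (rule sum.cong, auto)
  also have "\<dots> = (if v \<in> S then c v else 0)" using assms by (simp add: sum.delta)
  finally show ?thesis .
qed

fun dwt :: "'a::field \<Rightarrow> int \<Rightarrow> word \<Rightarrow> 'a" where
  "dwt q h [] = (if h = 0 then 1 else 0)"
| "dwt q h (a # w) = (if h + lval a < 0 then 0 else qint q (1 + h + lval a) * dwt q (h + lval a) w)"

definition Dm :: "'a::field \<Rightarrow> int \<Rightarrow> nat \<Rightarrow> 'a vV" where
  "Dm q h m = (\<Sum>w\<in>{w. length w = m}. scal (dwt q h w) (wd w))"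

lemma lookup_Dm: "lk (Dm q h m) w = (if length w = m then dwt q h w else 0)"
  unfolding Dm_def lookup_sum_wd[OF finite_words] by simp

lemma lval_ge: "lval a \<ge> -1" "lval a \<le> 1"
  by (cases a; simp add: lval_def)+

lemma dwt_short: "int (length w) < h \<Longrightarrow> dwt q h w = 0"
proof (induction w arbitrary: h)
  case Nil then show ?case by simp
next
  case (Cons a w)
  have "int (length w) < h + lval a" using Cons.prems lval_ge(1)[of a] by simp
  then show ?case using Cons.IH by simp
qed

lemma Dm_short: "int m < h \<Longrightarrow> Dm q h m = 0"
  by (rule poly_mapping_eqI) (simp add: lookup_Dm dwt_short)

definition sl :: "word \<Rightarrow> int" where "sl w = (\<Sum>c\<leftarrow>w. lval c)"

lemma sl_simps [simp]: "sl [] = 0" "sl (a # w) = lval a + sl w"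
  by (simp_all add: sl_def)

lemma dwt_nz: "dwt q h w \<noteq> 0 \<Longrightarrow> h + sl w = 0"
proof (induction w arbitrary: h)
  case Nil then show ?case by (simp split: if_splits)
next
  case (Cons a w)
  then have "dwt q (h + lval a) w \<noteq> 0" by (simp split: if_splits)
  then have "h + lval a + sl w = 0" by (rule Cons.IH)
  then show ?case by simp
qed

lemma pairing_lval: "pairing c a = 2 * lval c * lval a"
  by (cases c; cases a) (simp_all add: pairing_def lval_def)

lemma pp_Cons: "pp (c # u) a = pairing c a + pp u a"
  by (simp add: pp_def)

lemma pp_sl: "pp u a = 2 * sl u * lval a"
  by (induction u) (simp_all add: pp_Cons pairing_lval algebra_simps, simp add: pp_def)

lemma dd_Dm_Suc: "dd a (Dm q h (Suc m)) = scal (if h + lval a < 0 then 0 else qint q (1 + h + lval a)) (Dm q (h + lval a) m)"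
  by (rule poly_mapping_eqI) (simp add: lookup_Dm)

lemma dd_Dm_0: "dd a (Dm q h 0) = 0"
  by (rule poly_mapping_eqI) (simp add: lookup_Dm)

definition DD :: "'a::field \<Rightarrow> nat \<Rightarrow> nat \<Rightarrow> 'a vV" where
  "DD q h j = Dm q (int h) (2 * j + h)"

lemma lval_simps [simp]: "lval X = 1" "lval Y = -1"
  by (simp_all add: lval_def)

lemma dX_DD: "dd X (DD q h j) = scal (qint q (int h + 2)) (if j = 0 then 0 else DD q (Suc h) (j - 1))"
proof (cases "2 * j + h")
  case 0 then show ?thesis by (simp add: DD_def dd_Dm_0)
next
  case (Suc m)
  have "dd X (DD q h j) = dd X (Dm q (int h) (Suc m))"
    by (simp only: DD_def Suc)
  also have "\<dots> = scal (qint q (int h + 2)) (Dm q (int h + 1) m)"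
    by (simp add: dd_Dm_Suc add.commute add.left_commute)
  finally have "dd X (DD q h j) = scal (qint q (int h + 2)) (Dm q (int h + 1) m)" .
  moreover have "Dm q (int h + 1) m = (if j = 0 then 0 else DD q (Suc h) (j - 1))"
  proof (cases j)
    case 0 then show ?thesis using Suc by (simp add: Dm_short)
  next
    case (Suc j') then show ?thesis using \<open>2 * j + h = Suc m\<close> by (simp add: DD_def add.commute)
  qed
  ultimately show ?thesis by simp
qed

lemma dY_DD_Suc: "dd Y (DD q (Suc h) j) = scal (qint q (int h + 1)) (DD q h j)"
  by (simp add: DD_def dd_Dm_Suc add.commute)

lemma dY_DD_0: "dd Y (DD q 0 j) = 0"
  by (cases j) (simp_all add: DD_def dd_Dm_0 dd_Dm_Suc)

lemma lookup_DD_Nil: "lk (DD q h j) [] = (if h = 0 \<and> j = 0 then 1 else 0)"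
  by (simp add: DD_def lookup_Dm)

lemma keys_DD: "u \<in> ks (DD q h j) \<Longrightarrow> pp u a = - 2 * int h * lval a"
proof -
  assume "u \<in> ks (DD q h j)"
  then have "dwt q (int h) u \<noteq> 0" by (simp add: in_keys_iff DD_def lookup_Dm split: if_splits)
  then have "sl u = - int h" using dwt_nz by fastforce
  then show ?thesis by (simp add: pp_sl)
qed

lemma DD_0_0: "DD q 0 0 = wd []"
  by (rule poly_mapping_eqI) (simp add: DD_def lookup_Dm lookup_wd)

subsection \<open>Alternating words\<close>

lemma alt_X_Suc2: "alt X (2 * Suc m) = X # Y # alt X (2 * m)"
proof -
  have "2 * Suc m = Suc (Suc (2 * m))" by simp
  then show ?thesis by simp
qed

lemma alt_Y_Suc2: "alt Y (2 * Suc m) = Y # X # alt Y (2 * m)"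
proof -
  have "2 * Suc m = Suc (Suc (2 * m))" by simp
  then show ?thesis by simp
qed

lemma alt_X_odd: "alt X (2 * m + 1) = X # alt Y (2 * m)" by simp
lemma alt_Y_odd: "alt Y (2 * m + 1) = Y # alt X (2 * m)" by simp

lemma sl_alt_X: "sl (alt X (2 * m)) = 0"
  by (induction m) (simp_all add: alt_X_Suc2)

lemma sl_alt_Y: "sl (alt Y (2 * m)) = 0"
  by (induction m) (simp_all add: alt_Y_Suc2)

definition Hm :: "nat \<Rightarrow> 'a::field vV" where "Hm n = wd (alt Y (2 * n))"

lemma dX_Gt_0: "dd X (Gt 0) = 0" by (simp add: Gt_def)
lemma dX_Gt_Suc: "dd X (Gt (Suc m)) = Wpos m" by (simp add: Gt_def Wpos_def alt_X_Suc2)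
lemma dY_Gt: "dd Y (Gt m) = 0" by (cases m) (simp_all add: Gt_def alt_X_Suc2)
lemma dX_Wpos: "dd X (Wpos m) = 0" by (simp add: Wpos_def)
lemma dY_Wpos: "dd Y (Wpos m) = Gt m" by (simp add: Wpos_def Gt_def)
lemma dX_Wneg: "dd X (Wneg m) = Hm m" by (simp add: Wneg_def Hm_def)
lemma dY_Wneg: "dd Y (Wneg m) = 0" by (simp add: Wneg_def)
lemma dX_Hm: "dd X (Hm m) = 0" by (cases m) (simp_all add: Hm_def alt_Y_Suc2)
lemma dY_Hm_Suc: "dd Y (Hm (Suc m)) = Wneg m" by (simp add: Hm_def Wneg_def alt_Y_Suc2)
lemma lk_Gt_Nil: "lk (Gt m) [] = (if m = 0 then 1 else 0)" by (cases m) (simp_all add: Gt_def alt_X_Suc2 lookup_wd)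
lemma lk_Wpos_Nil: "lk (Wpos m) [] = 0" by (simp add: Wpos_def lookup_wd)
lemma lk_Wneg_Nil: "lk (Wneg m) [] = 0" by (simp add: Wneg_def lookup_wd)
lemma lk_Hm_Nil: "lk (Hm m) [] = (if m = 0 then 1 else 0)" by (cases m) (simp_all add: Hm_def alt_Y_Suc2 lookup_wd)

lemma keys_Gt: "u \<in> ks (Gt m) \<Longrightarrow> pp u a = 0"
  by (simp add: Gt_def pp_sl sl_alt_X)
lemma keys_Wpos: "u \<in> ks (Wpos m) \<Longrightarrow> pp u a = - 2 * lval a"
  by (simp add: Wpos_def pp_sl sl_alt_X)



definition psum :: "nat \<Rightarrow> word \<Rightarrow> int" where "psum i w = (\<Sum>j<i. lval (w ! j))"

lemma psum_0 [simp]: "psum 0 w = 0" by (simp add: psum_def)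
lemma psum_Suc_Cons [simp]: "psum (Suc i) (a # w) = lval a + psum i w"
  by (simp only: psum_def sum.lessThan_Suc_shift) simp

lemma prod_shift1: "(\<Prod>i\<in>{1..Suc n}. f i) = f 1 * (\<Prod>i\<in>{1..n}. f (Suc i))"
proof -
  have "(\<Prod>i\<in>{1..Suc n}. f i) = f 1 * (\<Prod>i\<in>{Suc 1..Suc n}. f i)"
    by (rule prod.atLeast_Suc_atMost) simp
  also have "(\<Prod>i\<in>{Suc 1..Suc n}. f i) = (\<Prod>i\<in>{1..n}. f (Suc i))"
    by (rule prod.shift_bounds_cl_Suc_ivl)
  finally show ?thesis .
qed

lemma dwt_psum: "dwt q h w = (if (\<forall>i. 1 \<le> i \<and> i \<le> length w \<longrightarrow> h + psum i w \<ge> 0) \<and> h + psum (length w) w = 0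
   then (\<Prod>i\<in>{1..length w}. qint q (1 + h + psum i w)) else 0)"
proof (induction w arbitrary: h)
  case Nil then show ?case by simp
next
  case (Cons a w)
  let ?h = "h + lval a"
  show ?case
  proof (cases "?h < 0")
    case True
    then have "\<not> (h + psum 1 (a # w) \<ge> 0)" by (simp add: numeral_eq_Suc)
    then show ?thesis using True by (auto simp del: One_nat_def) 
  next
    case False
    have c: "(\<forall>i. 1 \<le> i \<and> i \<le> length (a # w) \<longrightarrow> h + psum i (a # w) \<ge> 0) \<longleftrightarrow>
          (\<forall>i. 1 \<le> i \<and> i \<le> length w \<longrightarrow> ?h + psum i w \<ge> 0)"
    proof
      assume A: "\<forall>i. 1 \<le> i \<and> i \<le> length (a # w) \<longrightarrow> h + psum i (a # w) \<ge> 0"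
      show "\<forall>i. 1 \<le> i \<and> i \<le> length w \<longrightarrow> ?h + psum i w \<ge> 0"
      proof (intro allI impI)
        fix i assume "1 \<le> i \<and> i \<le> length w"
        then have "h + psum (Suc i) (a # w) \<ge> 0" using A[rule_format, of "Suc i"] by simp
        then show "?h + psum i w \<ge> 0" by simp
      qed
    next
      assume B: "\<forall>i. 1 \<le> i \<and> i \<le> length w \<longrightarrow> ?h + psum i w \<ge> 0"
      show "\<forall>i. 1 \<le> i \<and> i \<le> length (a # w) \<longrightarrow> h + psum i (a # w) \<ge> 0"
      proof (intro allI impI)
        fix i assume i: "1 \<le> i \<and> i \<le> length (a # w)"
        then obtain k where k: "i = Suc k" by (cases i) auto
        show "h + psum i (a # w) \<ge> 0"
        proof (cases k)
          case 0 then show ?thesis using k False by simp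
        next
          case (Suc k')
          then have "?h + psum k w \<ge> 0" using B i k by simp
          then show ?thesis using k by simp
        qed
      qed
    qed
    have p: "(\<Prod>i\<in>{1..length (a # w)}. qint q (1 + h + psum i (a # w)))
        = qint q (1 + ?h) * (\<Prod>i\<in>{1..length w}. qint q (1 + ?h + psum i w))"
      unfolding length_Cons prod_shift1 psum_Suc_Cons by (simp add: algebra_simps)
    let ?C = "(\<forall>i. 1 \<le> i \<and> i \<le> length w \<longrightarrow> ?h + psum i w \<ge> 0) \<and> ?h + psum (length w) w = 0"
    let ?P = "\<Prod>i\<in>{1..length w}. qint q (1 + ?h + psum i w)"
    have e1: "dwt q h (a # w) = (if ?C then qint q (1 + ?h) * ?P else 0)"
    proof -
      have "dwt q h (a # w) = qint q (1 + ?h) * dwt q ?h w" using False by (simp add: algebra_simps)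
      also have "\<dots> = qint q (1 + ?h) * (if ?C then ?P else 0)" by (simp only: Cons.IH)
      also have "\<dots> = (if ?C then qint q (1 + ?h) * ?P else 0)" by auto
      finally show ?thesis .
    qed
    have e2: "((\<forall>i. 1 \<le> i \<and> i \<le> length (a # w) \<longrightarrow> h + psum i (a # w) \<ge> 0) \<and> h + psum (length (a # w)) (a # w) = 0) = ?C"
      using c by (simp add: algebra_simps)
    show ?thesis unfolding e1 e2 p by simp
  qed
qed

lemma qint_0 [simp]: "qint q 0 = 0" by (simp add: qint_def)

lemma qint_1:
  assumes "q \<noteq> 0" "q * q \<noteq> 1" shows "qint q 1 = 1"
proof -
  have "q - inverse q \<noteq> 0" using assms by (auto simp: field_simps)
  then show ?thesis by (simp add: qint_def)
qed

lemma Cat_DD: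
  assumes "q \<noteq> 0" "q * q \<noteq> 1" shows "Cat q n = DD q 0 n"
proof (rule poly_mapping_eqI)
  fix w
  have fin: "finite {w. length w = 2 * n \<and> catalan_word w}"
    by (rule finite_subset[OF _ finite_words[of "2*n"]]) auto
  have L: "lk (Cat q n) w = (if length w = 2 * n \<and> catalan_word w then
       (\<Prod>i\<le>2 * n. qint q (1 + psum i w)) else 0)"
    unfolding Cat_def lookup_sum_wd[OF fin] psum_def by simp
  have R: "lk (DD q 0 n) w = (if length w = 2 * n then dwt q 0 w else 0)"
    by (simp add: DD_def lookup_Dm)
  show "lk (Cat q n) w = lk (DD q 0 n) w"
  proof (cases "length w = 2 * n")
    case False then show ?thesis using L R by simp
  next
    case True
    have cw: "catalan_word w \<longleftrightarrow> (\<forall>i. 1 \<le> i \<and> i \<le> length w \<longrightarrow> psum i w \<ge> 0) \<and> psum (length w) w = 0"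
      unfolding catalan_word_def psum_def[symmetric]
    proof (intro iffI conjI allI impI)
      fix i assume A: "(\<forall>i. 1 \<le> i \<and> i \<le> length w - 1 \<longrightarrow> 0 \<le> psum i w) \<and> psum (length w) w = 0"
        and i: "1 \<le> i \<and> i \<le> length w"
      show "0 \<le> psum i w"
      proof (cases "i = length w")
        case True then show ?thesis using A by simp
      next
        case False then show ?thesis using A i by auto
      qed
    qed auto
    have "{..2 * n} = insert 0 {1..2 * n}" by auto
    then have pr: "(\<Prod>i\<le>2 * n. qint q (1 + psum i w)) = (\<Prod>i\<in>{1..2 * n}. qint q (1 + psum i w))"
      using qint_1[OF assms] by simp
    show ?thesis
    proof (cases "catalan_word w")
      case True
      then have c: "(\<forall>i. 1 \<le> i \<and> i \<le> length w \<longrightarrow> 0 + psum i w \<ge> 0) \<and> 0 + psum (length w) w = 0"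
        using cw by simp
      have "lk (DD q 0 n) w = (\<Prod>i\<in>{1..length w}. qint q (1 + 0 + psum i w))"
        using R \<open>length w = 2 * n\<close> dwt_psum[of q 0 w] c by simp
      also have "\<dots> = lk (Cat q n) w" using L True \<open>length w = 2 * n\<close> pr by simp
      finally show ?thesis by simp
    next
      case False
      then have c: "\<not> ((\<forall>i. 1 \<le> i \<and> i \<le> length w \<longrightarrow> 0 + psum i w \<ge> 0) \<and> 0 + psum (length w) w = 0)"
        using cw by simp
      have "dwt q 0 w = 0"
        by (rule trans[OF dwt_psum[of q 0 w]]) (rule if_not_P[OF c])
      then have "lk (DD q 0 n) w = 0" using R by simp
      then show ?thesis using L False by simp
    qed
  qed
qed

lemma qint_rec1:
  assumes "q \<noteq> 0" "q * q \<noteq> 1"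
  shows "qint q (m + 1) = q powi m + inverse q * qint q m"
proof -
  have d: "q - inverse q \<noteq> 0" using assms by (auto simp: field_simps)
  have t: "q powi (m+1) = q powi m * q" "q powi (-(m+1)) = inverse (q powi m) * inverse q"
     "q powi (-m) = inverse (q powi m)" "q powi m \<noteq> 0"
    using assms by (simp_all add: power_int_add power_int_minus power_int_diff divide_inverse)
  obtain t where tt: "t = q powi m" by blast
  have "t \<noteq> 0" using t tt by simp
  then show ?thesis unfolding qint_def t tt[symmetric] using assms d
    by (simp add: field_simps)
qed

lemma qint_rec2:
  assumes "q \<noteq> 0" "q * q \<noteq> 1"
  shows "qint q (m + 1) = q powi (- m) + q * qint q m"
proof -
  have d: "q - inverse q \<noteq> 0" using assms by (auto simp: field_simps)
  have t: "q powi (m+1) = q powi m * q" "q powi (-(m+1)) = inverse (q powi m) * inverse q"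
     "q powi (-m) = inverse (q powi m)" "q powi m \<noteq> 0"
    using assms by (simp_all add: power_int_add power_int_minus power_int_diff divide_inverse)
  obtain t where tt: "t = q powi m" by blast
  have "t \<noteq> 0" using t tt by simp
  then show ?thesis unfolding qint_def t tt[symmetric] using assms d
    by (simp add: field_simps)
qed



lemma lk_if: "lk (if P then f else g) w = (if P then lk f w else lk g w)"
  by simp

lemma sum_shift_G1:
  fixes c \<alpha> \<beta> :: "nat \<Rightarrow> 'a::field"
  assumes c: "\<And>j. c (Suc j) = - q * c j"
  shows "(\<Sum>j\<le>Suc M. c j * (A * (if j = 0 then 0 else \<alpha> (j-1)) + B * (if j = Suc M then 0 else \<beta> j)
            - C * (if j = 0 then 0 else \<beta> (j-1))))
       = (\<Sum>j\<le>M. c j * (- q * A * \<alpha> j + (B + q * C) * \<beta> j))"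
proof -
  have 1: "(\<Sum>j\<le>Suc M. c j * (A * (if j = 0 then 0 else \<alpha> (j-1)))) = (\<Sum>j\<le>M. c j * (- q * A * \<alpha> j))"
    by (subst sum.atMost_Suc_shift) (simp add: c algebra_simps del: sum.atMost_Suc)
  have 2: "(\<Sum>j\<le>Suc M. c j * (B * (if j = Suc M then 0 else \<beta> j))) = (\<Sum>j\<le>M. c j * (B * \<beta> j))"
    by (simp add: sum.atMost_Suc)
  have 3: "(\<Sum>j\<le>Suc M. c j * (C * (if j = 0 then 0 else \<beta> (j-1)))) = (\<Sum>j\<le>M. c j * (- q * C * \<beta> j))"
    by (subst sum.atMost_Suc_shift) (simp add: c algebra_simps del: sum.atMost_Suc)
  have "(\<Sum>j\<le>Suc M. c j * (A * (if j = 0 then 0 else \<alpha> (j-1)) + B * (if j = Suc M then 0 else \<beta> j)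
            - C * (if j = 0 then 0 else \<beta> (j-1))))
      = (\<Sum>j\<le>Suc M. c j * (A * (if j = 0 then 0 else \<alpha> (j-1)))) + (\<Sum>j\<le>Suc M. c j * (B * (if j = Suc M then 0 else \<beta> j)))
        - (\<Sum>j\<le>Suc M. c j * (C * (if j = 0 then 0 else \<beta> (j-1))))"
    by (simp only: distrib_left right_diff_distrib sum.distrib sum_subtractf)
  also have "\<dots> = (\<Sum>j\<le>M. c j * (- q * A * \<alpha> j)) + (\<Sum>j\<le>M. c j * (B * \<beta> j)) - (\<Sum>j\<le>M. c j * (- q * C * \<beta> j))"
    by (simp only: 1 2 3)
  also have "\<dots> = (\<Sum>j\<le>M. c j * (- q * A * \<alpha> j + (B + q * C) * \<beta> j))"
    by (simp only: sum.distrib[symmetric] sum_subtractf[symmetric]) (rule sum.cong, simp_all add: algebra_simps)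
  finally show ?thesis .
qed

definition cc :: "'a::field \<Rightarrow> nat \<Rightarrow> 'a" where "cc q j = (-1) ^ j * q ^ j"

lemma cc_Suc: "cc q (Suc j) = - q * cc q j" by (simp add: cc_def)

lemma LX_DD: "dd X (star q (DD q h j) g) = star q (dd X (DD q h j)) g + scal (q powi (- 2 * int h)) (star q (DD q h j) (dd X g))"
  by (rule star_leibniz) (simp add: keys_DD)
lemma LY_DD: "dd Y (star q (DD q h j) g) = star q (dd Y (DD q h j)) g + scal (q powi (2 * int h)) (star q (DD q h j) (dd Y g))"
  by (rule star_leibniz) (simp add: keys_DD)

definition Psi1 :: "'a::field \<Rightarrow> nat \<Rightarrow> nat \<Rightarrow> 'a vV" where
  "Psi1 q k N = (\<Sum>j\<le>N. scal (cc q j) (star q (DD q (Suc k) j) (Gt (N - j))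
        - scal (q powi (- int k)) (star q (DD q k j) (Wpos (N - j)))))"

lemma star_if_right: "star q f (if P then 0 else g) = (if P then 0 else star q f g)" by simp
lemma star_if_left: "star q (if P then 0 else f) g = (if P then 0 else star q f g)" by simp

lemma dX_Gt: "dd X (Gt m) = (if m = 0 then 0 else Wpos (m - 1))"
  by (cases m) (simp_all add: dX_Gt_0 dX_Gt_Suc)

lemma Psi1_dX_Suc:
  assumes q: "q \<noteq> 0" "q * q \<noteq> 1"
  shows "dd X (Psi1 q k (Suc M)) = scal (- q * qint q (int k + 3)) (Psi1 q (Suc k) M)"
proof (rule poly_mapping_eqI)
  fix w
  define \<alpha> where "\<alpha> j = lk (star q (DD q (Suc (Suc k)) j) (Gt (M - j))) w" for j
  define \<beta> where "\<beta> j = lk (star q (DD q (Suc k) j) (Wpos (M - j))) w" for j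
  have tm: "lk (dd X (star q (DD q (Suc k) j) (Gt (Suc M - j))
        - scal (q powi (- int k)) (star q (DD q k j) (Wpos (Suc M - j))))) w
     = qint q (int k + 3) * (if j = 0 then 0 else \<alpha> (j-1)) + q powi (- 2 * int (Suc k)) * (if j = Suc M then 0 else \<beta> j)
       - q powi (- int k) * qint q (int k + 2) * (if j = 0 then 0 else \<beta> (j-1))" if "j \<le> Suc M" for j
  proof -
    have a: "lk (star q (dd X (DD q (Suc k) j)) (Gt (Suc M - j))) w = qint q (int k + 3) * (if j = 0 then 0 else \<alpha> (j-1))"
      using that by (cases j) (simp_all add: dX_DD \<alpha>_def add.commute)
    have b: "lk (star q (DD q (Suc k) j) (dd X (Gt (Suc M - j)))) w = (if j = Suc M then 0 else \<beta> j)"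
      using that by (cases "j = Suc M") (simp_all add: dX_Gt \<beta>_def Suc_diff_le)
    have c: "lk (star q (dd X (DD q k j)) (Wpos (Suc M - j))) w = qint q (int k + 2) * (if j = 0 then 0 else \<beta> (j-1))"
      using that by (cases j) (simp_all add: dX_DD \<beta>_def)
    show ?thesis
      by (simp only: dd_minus dd_scal LX_DD dX_Wpos star_zero_right scal_0 add_0_right lookup_minus_simp lookup_add_simp lookup_scal a b c)
         (simp add: algebra_simps)
  qed
  have "lk (dd X (Psi1 q k (Suc M))) w = (\<Sum>j\<le>Suc M. cc q j * (qint q (int k + 3) * (if j = 0 then 0 else \<alpha> (j-1)) + q powi (- 2 * int (Suc k)) * (if j = Suc M then 0 else \<beta> j)
       - q powi (- int k) * qint q (int k + 2) * (if j = 0 then 0 else \<beta> (j-1))))"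
    unfolding Psi1_def dd_sum dd_scal lookup_sum_simp lookup_scal
    by (rule sum.cong[OF refl]) (simp only: atMost_iff tm)
  also have "\<dots> = (\<Sum>j\<le>M. cc q j * (- q * qint q (int k + 3) * \<alpha> j + (q powi (- 2 * int (Suc k)) + q * (q powi (- int k) * qint q (int k + 2))) * \<beta> j))"
    by (rule sum_shift_G1) (rule cc_Suc)
  also have "\<dots> = (\<Sum>j\<le>M. cc q j * (- q * qint q (int k + 3) * (\<alpha> j - q powi (- int (Suc k)) * \<beta> j)))"
  proof (rule sum.cong, simp)
    fix j
    have r: "qint q (int k + 3) = q powi (- (int k + 2)) + q * qint q (int k + 2)"
      using qint_rec2[OF q, of "int k + 2"] by (simp add: add.assoc)
    have "q powi (- 2 * int (Suc k)) + q * (q powi (- int k) * qint q (int k + 2)) = q * qint q (int k + 3) * q powi (- int (Suc k))"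
      unfolding r using q(1) by (simp add: power_int_add power_int_diff power_int_minus power_int_mult field_simps power2_eq_square)
    then show "cc q j * (- q * qint q (int k + 3) * \<alpha> j + (q powi (- 2 * int (Suc k)) + q * (q powi (- int k) * qint q (int k + 2))) * \<beta> j)
      = cc q j * (- q * qint q (int k + 3) * (\<alpha> j - q powi (- int (Suc k)) * \<beta> j))"
      by (simp add: algebra_simps)
  qed
  also have "\<dots> = lk (scal (- q * qint q (int k + 3)) (Psi1 q (Suc k) M)) w"
    unfolding Psi1_def \<alpha>_def \<beta>_def by (simp add: sum_distrib_left algebra_simps)
  finally show "lk (dd X (Psi1 q k (Suc M))) w = lk (scal (- q * qint q (int k + 3)) (Psi1 q (Suc k) M)) w" .
qed

lemma Psi1_dX_0: "dd X (Psi1 q k 0) = 0"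
  by (simp add: Psi1_def LX_DD dX_DD dX_Gt_0 dX_Wpos)

lemma Psi1_Nil: "lk (Psi1 q k N) [] = 0"
  by (simp add: Psi1_def lookup_star_Nil lookup_DD_Nil lk_Wpos_Nil)

lemma fid1:
  fixes q p Q \<gamma> \<delta> :: "'a::field"
  assumes "q \<noteq> 0" "p \<noteq> 0"
  shows "(p * q + inverse q * Q) * \<gamma> - inverse (p * q) * (Q * \<delta> + (p * q) * (p * q) * \<gamma>) = inverse q * Q * (\<gamma> - inverse p * \<delta>)"
  using assms by (simp add: field_simps)

lemma Psi1_dY_Suc:
  assumes q: "q \<noteq> 0" "q * q \<noteq> 1"
  shows "dd Y (Psi1 q (Suc k) N) = scal (inverse q * qint q (int k + 1)) (Psi1 q k N)"
proof (rule poly_mapping_eqI)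
  fix w
  show "lk (dd Y (Psi1 q (Suc k) N)) w = lk (scal (inverse q * qint q (int k + 1)) (Psi1 q k N)) w"
    unfolding Psi1_def dd_sum dd_scal lookup_sum_simp lookup_scal sum_distrib_left
  proof (rule sum.cong[OF refl])
    fix j
    define \<gamma> where "\<gamma> = lk (star q (DD q (Suc k) j) (Gt (N - j))) w"
    define \<delta> where "\<delta> = lk (star q (DD q k j) (Wpos (N - j))) w"
    have e: "lk (dd Y (star q (DD q (Suc (Suc k)) j) (Gt (N - j)) - scal (q powi - int (Suc k)) (star q (DD q (Suc k) j) (Wpos (N - j))))) w
       = qint q (int k + 2) * \<gamma> - q powi (- int (Suc k)) * (qint q (int k + 1) * \<delta> + q powi (2 * int (Suc k)) * \<gamma>)"
      by (simp only: dd_minus dd_scal LY_DD dY_DD_Suc dY_Gt dY_Wpos star_zero_right scal_0 add_0_right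
          lookup_minus_simp lookup_add_simp lookup_scal star_scal_left \<gamma>_def \<delta>_def)
         (simp add: algebra_simps)
    have r: "qint q (int k + 2) = q powi (int k + 1) + inverse q * qint q (int k + 1)"
      using qint_rec1[OF q, of "int k + 1"] by (simp add: add.assoc)
    have "qint q (int k + 2) * \<gamma> - q powi (- int (Suc k)) * (qint q (int k + 1) * \<delta> + q powi (2 * int (Suc k)) * \<gamma>)
        = inverse q * qint q (int k + 1) * (\<gamma> - q powi (- int k) * \<delta>)"
    proof -
      have p: "q powi (int k + 1) = q ^ k * q" "q powi (- int (Suc k)) = inverse (q ^ k * q)"
        "q powi (2 * int (Suc k)) = (q ^ k * q) * (q ^ k * q)" "q powi (- int k) = inverse (q ^ k)"
      proof -
        have "int k + 1 = int (Suc k)" "2 * int (Suc k) = int (Suc k + Suc k)" by simp_all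
        then show "q powi (int k + 1) = q ^ k * q" "q powi (2 * int (Suc k)) = (q ^ k * q) * (q ^ k * q)"
          by (simp_all only: power_int_of_nat power_add power_Suc2)
        show "q powi (- int (Suc k)) = inverse (q ^ k * q)" "q powi (- int k) = inverse (q ^ k)"
          by (simp_all only: power_int_minus power_int_of_nat power_Suc2)
      qed
      show ?thesis unfolding r p by (rule fid1) (use q(1) in simp_all)
    qed
    then show "cc q j * lk (dd Y (star q (DD q (Suc (Suc k)) j) (Gt (N - j)) - scal (q powi - int (Suc k)) (star q (DD q (Suc k) j) (Wpos (N - j))))) w
      = inverse q * qint q (int k + 1) * (cc q j * lk (star q (DD q (Suc k) j) (Gt (N - j)) - scal (q powi - int k) (star q (DD q k j) (Wpos (N - j)))) w)"
      unfolding e by (simp only: \<gamma>_def \<delta>_def lookup_minus_simp lookup_scal) (simp add: algebra_simps)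
  qed
qed

lemma Psi1_dY_0:
  assumes q: "q \<noteq> 0" "q * q \<noteq> 1"
  shows "dd Y (Psi1 q 0 N) = 0"
  by (simp add: Psi1_def LY_DD dY_DD_Suc dY_DD_0 dY_Gt dY_Wpos qint_1[OF q])

lemma Psi1_zero:
  assumes q: "q \<noteq> 0" "q * q \<noteq> 1"
  shows "Psi1 q k N = 0"
proof (induction N arbitrary: k)
  case 0
  show ?case
  proof (induction k)
    case 0
    show ?case by (rule vV_ext) (simp_all only: Psi1_Nil Psi1_dX_0 Psi1_dY_0[OF q] dd_zero lookup_zero)
  next
    case (Suc k)
    show ?case by (rule vV_ext) (simp_all only: Psi1_Nil Psi1_dX_0 Psi1_dY_Suc[OF q] Suc.IH dd_zero lookup_zero scal_0)
  qed
next
  case (Suc M)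
  note outer = Suc.IH
  show ?case
  proof (induction k)
    case 0
    show ?case by (rule vV_ext) (simp_all only: Psi1_Nil Psi1_dX_Suc[OF q] Psi1_dY_0[OF q] outer dd_zero lookup_zero scal_0)
  next
    case (Suc k)
    show ?case by (rule vV_ext) (simp_all only: Psi1_Nil Psi1_dX_Suc[OF q] Psi1_dY_Suc[OF q] outer Suc.IH dd_zero lookup_zero scal_0)
  qed
qed



lemma keys_cat_X: "u \<in> ks (cat (wd [X]) f :: 'a::field vV) \<Longrightarrow> \<exists>u'. u = X # u' \<and> u' \<in> ks f"
  by (cases u) (auto simp: in_keys_iff lookup_cat_left split: if_splits)

lemma keys_XC: "u \<in> ks (cat (wd [X]) (DD q 0 i)) \<Longrightarrow> pp u a = 2 * lval a"
  using keys_cat_X[of u "DD q 0 i"] keys_DD[of _ q 0 i a] by (auto simp: pp_Cons pairing_lval)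

lemma LX_XC: "dd X (star q (cat (wd [X]) (DD q 0 i)) g) = star q (DD q 0 i) g + scal (q powi 2) (star q (cat (wd [X]) (DD q 0 i)) (dd X g))"
  using star_leibniz[of "cat (wd [X]) (DD q 0 i)" X 2 q g] keys_XC[of _ q i X] by simp
lemma LY_XC: "dd Y (star q (cat (wd [X]) (DD q 0 i)) g) = scal (q powi (-2)) (star q (cat (wd [X]) (DD q 0 i)) (dd Y g))"
  using star_leibniz[of "cat (wd [X]) (DD q 0 i)" Y "-2" q g] keys_XC[of _ q i Y] by simp
lemma L_D0: "dd a (star q (DD q 0 i) g) = star q (dd a (DD q 0 i)) g + star q (DD q 0 i) (dd a g)"
  using star_leibniz[of "DD q 0 i" a 0 q g] keys_DD[of _ q 0 i a] by simp

definition Lq :: "'a::field \<Rightarrow> nat \<Rightarrow> 'a vV" where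
  "Lq q n = (\<Sum>i\<le>n. scal (cc q i) (star q (cat (wd [X]) (DD q 0 i)) (Gt (n - i))))"

definition Mq :: "'a::field \<Rightarrow> nat \<Rightarrow> 'a vV" where
  "Mq q n = (\<Sum>i\<le>n. scal (cc q i) (star q (DD q 0 i) (Gt (n - i)) + scal (q powi 2) (star q (cat (wd [X]) (DD q 0 i)) (dd X (Gt (n - i))))))"

lemma L_dX: "dd X (Lq q n) = Mq q n"
  by (simp add: Lq_def Mq_def LX_XC)

lemma L_dY: "dd Y (Lq q n) = 0"
  by (simp add: Lq_def LY_XC dY_Gt)

lemma L_Nil: "lk (Lq q n) [] = 0"
  by (simp add: Lq_def lookup_star_Nil lookup_cat_left)

lemma M_Nil: "lk (Mq q (Suc m)) [] = 0"
  by (simp add: Mq_def lookup_star_Nil lookup_cat_left lookup_DD_Nil lk_Gt_Nil)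

lemma dY_dX_Gt: "dd Y (dd X (Gt k)) = (if k = 0 then 0 else Gt (k - 1))"
  by (simp add: dX_Gt dY_Wpos)
lemma dX_dX_Gt: "dd X (dd X (Gt k)) = 0"
  by (simp add: dX_Gt dX_Wpos)

lemma M_dY:
  assumes q: "q \<noteq> 0"
  shows "dd Y (Mq q (Suc m)) = Lq q m"
proof -
  have "dd Y (Mq q (Suc m)) = (\<Sum>i\<le>Suc m. scal (cc q i) (if Suc m - i = 0 then 0 else star q (cat (wd [X]) (DD q 0 i)) (Gt (Suc m - i - 1))))"
    unfolding Mq_def
    by (rule trans[OF dd_sum], rule sum.cong[OF refl])
       (use q in \<open>simp add: L_D0 LY_XC dY_DD_0 dY_Gt dY_dX_Gt power_int_minus\<close>)
  also have "\<dots> = Lq q m"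
    unfolding Lq_def by (simp add: sum.atMost_Suc)
  finally show ?thesis .
qed

lemma M_dX:
  assumes q: "q \<noteq> 0" "q * q \<noteq> 1"
  shows "dd X (Mq q (Suc m)) = scal (- q * qint q 2) (Psi1 q 0 m)"
proof (rule poly_mapping_eqI)
  fix w
  define \<alpha> where "\<alpha> j = lk (star q (DD q 1 j) (Gt (m - j))) w" for j
  define \<beta> where "\<beta> j = lk (star q (DD q 0 j) (Wpos (m - j))) w" for j
  have tm: "lk (dd X (star q (DD q 0 j) (Gt (Suc m - j)) + scal (q powi 2) (star q (cat (wd [X]) (DD q 0 j)) (dd X (Gt (Suc m - j)))))) w
     = qint q 2 * (if j = 0 then 0 else \<alpha> (j-1)) + (1 + q powi 2) * (if j = Suc m then 0 else \<beta> j)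
       - 0 * (if j = 0 then 0 else \<beta> (j-1))" if "j \<le> Suc m" for j
  proof -
    have a: "lk (star q (dd X (DD q 0 j)) (Gt (Suc m - j))) w = qint q 2 * (if j = 0 then 0 else \<alpha> (j-1))"
      using that by (cases j) (simp_all add: dX_DD \<alpha>_def)
    have b: "lk (star q (DD q 0 j) (dd X (Gt (Suc m - j)))) w = (if j = Suc m then 0 else \<beta> j)"
      using that by (cases "j = Suc m") (simp_all add: dX_Gt \<beta>_def Suc_diff_le)
    show ?thesis
      by (simp only: dd_add dd_scal L_D0 LX_XC dX_dX_Gt star_zero_right scal_0 add_0_right
          lookup_add_simp lookup_scal a b) (simp add: algebra_simps)
  qed
  have "lk (dd X (Mq q (Suc m))) w = (\<Sum>j\<le>Suc m. cc q j * (qint q 2 * (if j = 0 then 0 else \<alpha> (j-1)) + (1 + q powi 2) * (if j = Suc m then 0 else \<beta> j)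
       - 0 * (if j = 0 then 0 else \<beta> (j-1))))"
    unfolding Mq_def dd_sum dd_scal lookup_sum_simp lookup_scal
    by (rule sum.cong[OF refl]) (simp only: atMost_iff tm)
  also have "\<dots> = (\<Sum>j\<le>m. cc q j * (- q * qint q 2 * \<alpha> j + ((1 + q powi 2) + q * 0) * \<beta> j))"
    by (rule sum_shift_G1) (rule cc_Suc)
  also have "\<dots> = (\<Sum>j\<le>m. cc q j * (- q * qint q 2 * (\<alpha> j - q powi (- int 0) * \<beta> j)))"
  proof (rule sum.cong, simp)
    fix j
    have r: "qint q 2 = q + inverse q"
      using qint_rec1[OF q, of 1] qint_1[OF q] by simp
    have "1 + q powi 2 = q * qint q 2" unfolding r using q(1) by (simp add: field_simps power2_eq_square)
    then show "cc q j * (- q * qint q 2 * \<alpha> j + ((1 + q powi 2) + q * 0) * \<beta> j) = cc q j * (- q * qint q 2 * (\<alpha> j - q powi (- int 0) * \<beta> j))"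
      by (simp add: algebra_simps)
  qed
  also have "\<dots> = lk (scal (- q * qint q 2) (Psi1 q 0 m)) w"
    unfolding Psi1_def \<alpha>_def \<beta>_def by (simp add: sum_distrib_left algebra_simps)
  finally show "lk (dd X (Mq q (Suc m))) w = lk (scal (- q * qint q 2) (Psi1 q 0 m)) w" .
qed

lemma Lq_Wneg:
  assumes q: "q \<noteq> 0" "q * q \<noteq> 1"
  shows "Lq q n = Wneg n"
proof (induction n)
  case 0
  show ?case by (simp add: Lq_def cc_def Gt_def Wneg_def DD_0_0)
next
  case (Suc m)
  have M: "Mq q (Suc m) = Hm (Suc m)"
    by (rule vV_ext) (simp_all only: M_Nil lk_Hm_Nil M_dX[OF q] Psi1_zero[OF q] scal_0 dX_Hm
         M_dY[OF q(1)] dY_Hm_Suc Suc.IH nat.simps if_False)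
  show ?case
    by (rule vV_ext) (simp_all only: L_Nil lk_Wneg_Nil L_dX M dX_Wneg L_dY dY_Wneg)
qed



definition EE :: "'a::field \<Rightarrow> nat \<Rightarrow> nat \<Rightarrow> 'a vV" where
  "EE q h j = cat (DD q h j) (wd [Y])"

lemma cat_if_left: "cat (if P then 0 else f) g = (if P then 0 else cat f g)" by simp

lemma dX_EE: "dd X (EE q h j) = scal (qint q (int h + 2)) (if j = 0 then 0 else EE q (Suc h) (j - 1))"
  by (simp add: EE_def dd_cat_right dX_DD cat_scal_left)

lemma dY_EE_Suc: "dd Y (EE q (Suc h) j) = scal (qint q (int h + 1)) (EE q h j)"
  by (simp add: EE_def dd_cat_right dY_DD_Suc cat_scal_left lookup_DD_Nil)

lemma dY_EE_0: "dd Y (EE q 0 j) = (if j = 0 then wd [] else 0)"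
  by (simp add: EE_def dd_cat_right dY_DD_0 lookup_DD_Nil)

lemma EE_Nil: "lk (EE q h j) [] = 0"
  by (simp add: EE_def lookup_cat_right)

lemma L_Gt: "dd a (star q (Gt m) g) = star q (dd a (Gt m)) g + star q (Gt m) (dd a g)"
proof -
  have "dd a (star q (Gt m) g) = star q (dd a (Gt m)) g + scal (q powi 0) (star q (Gt m) (dd a g))"
    by (rule star_leibniz) (simp add: keys_Gt)
  then show ?thesis by simp
qed
lemma LX_Wpos: "dd X (star q (Wpos m) g) = scal (q powi (-2)) (star q (Wpos m) (dd X g))"
proof -
  have "dd X (star q (Wpos m) g) = star q (dd X (Wpos m)) g + scal (q powi (-2)) (star q (Wpos m) (dd X g))"
    by (rule star_leibniz) (simp add: keys_Wpos)
  then show ?thesis by (simp add: dX_Wpos)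
qed
lemma LY_Wpos: "dd Y (star q (Wpos m) g) = star q (Gt m) g + scal (q powi 2) (star q (Wpos m) (dd Y g))"
proof -
  have "dd Y (star q (Wpos m) g) = star q (dd Y (Wpos m)) g + scal (q powi 2) (star q (Wpos m) (dd Y g))"
    by (rule star_leibniz) (simp add: keys_Wpos)
  then show ?thesis by (simp add: dY_Wpos)
qed

definition Lp :: "'a::field \<Rightarrow> nat \<Rightarrow> 'a vV" where
  "Lp q n = (\<Sum>i\<le>n. scal (cc q i) (star q (Gt (n - i)) (EE q 0 i)))"

definition Psi3 :: "'a::field \<Rightarrow> nat \<Rightarrow> nat \<Rightarrow> 'a vV" where
  "Psi3 q k N = (\<Sum>j\<le>N. scal (cc q j) (scal (qint q (int k + 2)) (star q (Gt (N - j)) (EE q (Suc k) j))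
        - scal (q powi (- int (Suc k)) * qint q (int k + 1)) (star q (Wpos (N - j)) (EE q k j))))"

lemma Lp_Nil: "lk (Lp q n) [] = 0"
  by (simp add: Lp_def lookup_star_Nil EE_Nil)

lemma Psi3_Nil: "lk (Psi3 q k N) [] = 0"
  by (simp add: Psi3_def lookup_star_Nil EE_Nil)

lemma Lp_0: "Lp q 0 = Wpos 0"
  by (simp add: Lp_def cc_def Gt_def Wpos_def EE_def DD_0_0)

lemma Lp_dY: "dd Y (Lp q n) = Gt n"
proof -
  have "dd Y (Lp q n) = (\<Sum>i\<le>n. if i = 0 then Gt n else 0)"
    unfolding Lp_def dd_sum by (rule sum.cong[OF refl]) (simp add: L_Gt dY_Gt dY_EE_0 cc_def)
  also have "\<dots> = Gt n" by (simp add: sum.delta)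
  finally show ?thesis .
qed

lemma Psi3_dX_0: "dd X (Psi3 q k 0) = 0"
  by (simp add: Psi3_def L_Gt LX_Wpos dX_Gt_0 dX_EE)

lemma fid2:
  fixes q p Q R :: "'a::field"
  assumes "q \<noteq> 0" "p \<noteq> 0" "R = p * q + inverse q * Q"
  shows "R + q * (inverse (p * q) * Q * inverse (q * q) * R) = q * R * (inverse (p * q * q) * R)"
proof -
  have "1 + inverse (p * q * q) * Q = q * (inverse (p * q * q) * R)"
    unfolding assms(3) using assms(1,2) by (simp add: field_simps)
  then have "R * (1 + inverse (p * q * q) * Q) = R * (q * (inverse (p * q * q) * R))" by simp
  then show ?thesis using assms(1,2) by (simp add: field_simps)
qed

lemma Psi3_dX_Suc:
  assumes q: "q \<noteq> 0" "q * q \<noteq> 1"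
  shows "dd X (Psi3 q k (Suc M)) = scal (- q * qint q (int k + 2)) (Psi3 q (Suc k) M)"
proof (rule poly_mapping_eqI)
  fix w
  define \<alpha> where "\<alpha> j = lk (star q (Gt (M - j)) (EE q (Suc (Suc k)) j)) w" for j
  define \<beta> where "\<beta> j = lk (star q (Wpos (M - j)) (EE q (Suc k) j)) w" for j
  define A where "A = qint q (int k + 2) * qint q (int k + 3)"
  define B where "B = qint q (int k + 2)"
  define C where "C = q powi (- int (Suc k)) * qint q (int k + 1) * q powi (-2) * qint q (int k + 2)"
  have tm: "lk (dd X (scal (qint q (int k + 2)) (star q (Gt (Suc M - j)) (EE q (Suc k) j))
        - scal (q powi (- int (Suc k)) * qint q (int k + 1)) (star q (Wpos (Suc M - j)) (EE q k j)))) w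
     = A * (if j = 0 then 0 else \<alpha> (j-1)) + B * (if j = Suc M then 0 else \<beta> j)
       - C * (if j = 0 then 0 else \<beta> (j-1))" if "j \<le> Suc M" for j
  proof -
    have a: "lk (star q (Gt (Suc M - j)) (dd X (EE q (Suc k) j))) w = qint q (int k + 3) * (if j = 0 then 0 else \<alpha> (j-1))"
      using that by (cases j) (simp_all add: dX_EE \<alpha>_def add.commute)
    have b: "lk (star q (dd X (Gt (Suc M - j))) (EE q (Suc k) j)) w = (if j = Suc M then 0 else \<beta> j)"
      using that by (cases "j = Suc M") (simp_all add: dX_Gt \<beta>_def Suc_diff_le)
    have c: "lk (star q (Wpos (Suc M - j)) (dd X (EE q k j))) w = qint q (int k + 2) * (if j = 0 then 0 else \<beta> (j-1))"
      using that by (cases j) (simp_all add: dX_EE \<beta>_def)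
    show ?thesis
      by (simp only: dd_minus dd_scal L_Gt LX_Wpos lookup_minus_simp lookup_add_simp lookup_scal a b c)
         (simp add: A_def B_def C_def algebra_simps)
  qed
  have "lk (dd X (Psi3 q k (Suc M))) w = (\<Sum>j\<le>Suc M. cc q j * (A * (if j = 0 then 0 else \<alpha> (j-1)) + B * (if j = Suc M then 0 else \<beta> j)
       - C * (if j = 0 then 0 else \<beta> (j-1))))"
    unfolding Psi3_def dd_sum dd_scal lookup_sum_simp lookup_scal
    by (rule sum.cong[OF refl]) (simp only: atMost_iff tm)
  also have "\<dots> = (\<Sum>j\<le>M. cc q j * (- q * A * \<alpha> j + (B + q * C) * \<beta> j))"
    by (rule sum_shift_G1) (rule cc_Suc)
  also have "\<dots> = (\<Sum>j\<le>M. cc q j * (- q * qint q (int k + 2) * (qint q (int (Suc k) + 2) * \<alpha> j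
        - q powi (- int (Suc (Suc k))) * qint q (int (Suc k) + 1) * \<beta> j)))"
  proof (rule sum.cong, simp)
    fix j
    have r: "qint q (int k + 2) = q powi (int k + 1) + inverse q * qint q (int k + 1)"
      using qint_rec1[OF q, of "int k + 1"] by (simp add: add.assoc)
    have p: "q powi (int k + 1) = q ^ k * q" "q powi (- int (Suc k)) = inverse (q ^ k * q)"
        "q powi (- int (Suc (Suc k))) = inverse (q ^ k * q * q)" "q powi (-2) = inverse (q * q)"
    proof -
      have "int k + 1 = int (Suc k)" by simp_all
      then show "q powi (int k + 1) = q ^ k * q" by (simp_all only: power_int_of_nat power_Suc2)
      show "q powi (- int (Suc k)) = inverse (q ^ k * q)" "q powi (- int (Suc (Suc k))) = inverse (q ^ k * q * q)"
        by (simp_all only: power_int_minus power_int_of_nat power_Suc2)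
      show "q powi (-2) = inverse (q * q)" by (simp add: power_int_minus power2_eq_square)
    qed
    have "B + q * C = q * qint q (int k + 2) * (q powi (- int (Suc (Suc k))) * qint q (int (Suc k) + 1))"
    proof -
      have e: "int (Suc k) + 1 = int k + 2" by simp
      show ?thesis unfolding B_def C_def p e
        by (rule fid2) (use q(1) r p in simp_all)
    qed
    moreover have "A = qint q (int k + 2) * qint q (int (Suc k) + 2)"
    proof -
      have "int (Suc k) + 2 = int k + 3" by simp
      then show ?thesis by (simp only: A_def)
    qed
    ultimately show "cc q j * (- q * A * \<alpha> j + (B + q * C) * \<beta> j) = cc q j * (- q * qint q (int k + 2) * (qint q (int (Suc k) + 2) * \<alpha> j
        - q powi (- int (Suc (Suc k))) * qint q (int (Suc k) + 1) * \<beta> j))"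
      by (simp add: algebra_simps)
  qed
  also have "\<dots> = lk (scal (- q * qint q (int k + 2)) (Psi3 q (Suc k) M)) w"
    unfolding Psi3_def \<alpha>_def \<beta>_def by (simp add: sum_distrib_left algebra_simps)
  finally show "lk (dd X (Psi3 q k (Suc M))) w = lk (scal (- q * qint q (int k + 2)) (Psi3 q (Suc k) M)) w" .
qed

lemma fid3:
  fixes q p Q1 Q2 Q3 \<gamma> \<delta> :: "'a::field"
  assumes "q \<noteq> 0" "p \<noteq> 0" "Q3 = inverse (p * q * q) + q * Q2"
  shows "Q3 * (Q2 * \<gamma>) - inverse (p * q * q) * Q2 * (\<gamma> + q * q * (Q1 * \<delta>)) = q * Q2 * (Q2 * \<gamma> - inverse (p * q) * Q1 * \<delta>)"
  unfolding assms(3) using assms(1,2) by (simp add: field_simps)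

lemma Psi3_dY_Suc:
  assumes q: "q \<noteq> 0" "q * q \<noteq> 1"
  shows "dd Y (Psi3 q (Suc k) N) = scal (q * qint q (int k + 2)) (Psi3 q k N)"
proof (rule poly_mapping_eqI)
  fix w
  have e: "int (Suc k) + 2 = int k + 3" "int (Suc k) + 1 = int k + 2" by simp_all
  have p: "q powi (- int (Suc k)) = inverse (q ^ k * q)"
        "q powi (- int (Suc (Suc k))) = inverse (q ^ k * q * q)" "q powi 2 = q * q"
    by (simp_all only: power_int_minus power_int_of_nat power_Suc2) (simp add: power2_eq_square)
  have r: "qint q (int k + 3) = inverse (q ^ k * q * q) + q * qint q (int k + 2)"
  proof -
    have "qint q (int k + 2 + 1) = q powi (- (int k + 2)) + q * qint q (int k + 2)" by (rule qint_rec2[OF q])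
    moreover have "q powi (- (int k + 2)) = inverse (q ^ k * q * q)"
    proof -
      have e2: "- (int k + 2) = - int (Suc (Suc k))" by simp
      show ?thesis unfolding e2 by (rule p(2))
    qed
    moreover have "int k + 2 + 1 = int k + 3" by simp
    ultimately show ?thesis by simp
  qed
  show "lk (dd Y (Psi3 q (Suc k) N)) w = lk (scal (q * qint q (int k + 2)) (Psi3 q k N)) w"
    unfolding Psi3_def dd_sum dd_scal lookup_sum_simp lookup_scal sum_distrib_left e p
  proof (rule sum.cong[OF refl])
    fix j
    define \<gamma> where "\<gamma> = lk (star q (Gt (N - j)) (EE q (Suc k) j)) w"
    define \<delta> where "\<delta> = lk (star q (Wpos (N - j)) (EE q k j)) w"
    have t: "lk (dd Y (scal (qint q (int k + 3)) (star q (Gt (N - j)) (EE q (Suc (Suc k)) j))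
          - scal (inverse (q ^ k * q * q) * qint q (int k + 2)) (star q (Wpos (N - j)) (EE q (Suc k) j)))) w
       = qint q (int k + 3) * (qint q (int k + 2) * \<gamma>) - inverse (q ^ k * q * q) * qint q (int k + 2) * (\<gamma> + q * q * (qint q (int k + 1) * \<delta>))"
      by (simp only: dd_minus dd_scal L_Gt LY_Wpos dY_Gt dY_EE_Suc e star_zero_left star_scal_right add_0_left
          lookup_minus_simp lookup_add_simp lookup_scal p \<gamma>_def \<delta>_def)
    have f: "qint q (int k + 3) * (qint q (int k + 2) * \<gamma>) - inverse (q ^ k * q * q) * qint q (int k + 2) * (\<gamma> + q * q * (qint q (int k + 1) * \<delta>))
        = q * qint q (int k + 2) * (qint q (int k + 2) * \<gamma> - inverse (q ^ k * q) * qint q (int k + 1) * \<delta>)"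
      by (rule fid3) (use q(1) r in simp_all)
    show "cc q j * lk (dd Y (scal (qint q (int k + 3)) (star q (Gt (N - j)) (EE q (Suc (Suc k)) j))
          - scal (inverse (q ^ k * q * q) * qint q (int k + 2)) (star q (Wpos (N - j)) (EE q (Suc k) j)))) w
      = q * qint q (int k + 2) * (cc q j * lk (scal (qint q (int k + 2)) (star q (Gt (N - j)) (EE q (Suc k) j))
          - scal (inverse (q ^ k * q) * qint q (int k + 1)) (star q (Wpos (N - j)) (EE q k j))) w)"
      unfolding t f by (simp add: \<gamma>_def \<delta>_def algebra_simps)
  qed
qed

lemma Psi3_dY_0:
  assumes q: "q \<noteq> 0" "q * q \<noteq> 1"
  shows "dd Y (Psi3 q 0 N) = scal q (Lp q N - Wpos N)"
proof (rule poly_mapping_eqI)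
  fix w
  have r: "qint q 2 = q + inverse q"
    using qint_rec1[OF q, of 1] qint_1[OF q] by simp
  have t: "lk (dd Y (scal (cc q j) (scal (qint q (int 0 + 2)) (star q (Gt (N - j)) (EE q (Suc 0) j))
        - scal (q powi (- int (Suc 0)) * qint q (int 0 + 1)) (star q (Wpos (N - j)) (EE q 0 j))))) w
      = cc q j * (q * lk (star q (Gt (N - j)) (EE q 0 j)) w) - (if j = 0 then q * lk (Wpos N) w else 0)" for j
  proof -
    have "lk (dd Y (scal (cc q j) (scal (qint q (int 0 + 2)) (star q (Gt (N - j)) (EE q (Suc 0) j))
        - scal (q powi (- int (Suc 0)) * qint q (int 0 + 1)) (star q (Wpos (N - j)) (EE q 0 j))))) w
      = cc q j * (qint q 2 * lk (star q (Gt (N - j)) (EE q 0 j)) w - inverse q * (lk (star q (Gt (N - j)) (EE q 0 j)) w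
          + q powi 2 * (if j = 0 then lk (Wpos N) w else 0)))"
      using q by (simp add: L_Gt LY_Wpos dY_Gt dY_EE_Suc dY_EE_0 qint_1 power_int_minus)
    also have "\<dots> = cc q j * (q * lk (star q (Gt (N - j)) (EE q 0 j)) w) - (if j = 0 then q * lk (Wpos N) w else 0)"
      unfolding r using q(1) by (simp add: cc_def field_simps power2_eq_square)
    finally show ?thesis .
  qed
  have "lk (dd Y (Psi3 q 0 N)) w = (\<Sum>j\<le>N. cc q j * (q * lk (star q (Gt (N - j)) (EE q 0 j)) w) - (if j = 0 then q * lk (Wpos N) w else 0))"
    unfolding Psi3_def dd_sum lookup_sum_simp t ..
  also have "\<dots> = q * (\<Sum>j\<le>N. cc q j * lk (star q (Gt (N - j)) (EE q 0 j)) w) - q * lk (Wpos N) w"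
    by (simp add: sum_subtractf sum.delta sum_distrib_left algebra_simps)
  also have "\<dots> = lk (scal q (Lp q N - Wpos N)) w"
    by (simp add: Lp_def algebra_simps)
  finally show "lk (dd Y (Psi3 q 0 N)) w = lk (scal q (Lp q N - Wpos N)) w" .
qed

lemma qinv_cancel: "(q::'a::field) \<noteq> 0 \<Longrightarrow> q * (inverse q * x) = x"
  by (simp add: mult.assoc[symmetric])

lemma Lp_dX:
  assumes q: "q \<noteq> 0" "q * q \<noteq> 1"
  shows "dd X (Lp q (Suc m)) = scal (- q) (Psi3 q 0 m)"
proof (rule poly_mapping_eqI)
  fix w
  define \<alpha> where "\<alpha> j = lk (star q (Gt (m - j)) (EE q 1 j)) w" for j
  define \<beta> where "\<beta> j = lk (star q (Wpos (m - j)) (EE q 0 j)) w" for j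
  have tm: "lk (dd X (star q (Gt (Suc m - j)) (EE q 0 j))) w
     = qint q 2 * (if j = 0 then 0 else \<alpha> (j-1)) + 1 * (if j = Suc m then 0 else \<beta> j)
       - 0 * (if j = 0 then 0 else \<beta> (j-1))" if "j \<le> Suc m" for j
  proof -
    have a: "lk (star q (Gt (Suc m - j)) (dd X (EE q 0 j))) w = qint q 2 * (if j = 0 then 0 else \<alpha> (j-1))"
      using that by (cases j) (simp_all add: dX_EE \<alpha>_def)
    have b: "lk (star q (dd X (Gt (Suc m - j))) (EE q 0 j)) w = (if j = Suc m then 0 else \<beta> j)"
      using that by (cases "j = Suc m") (simp_all add: dX_Gt \<beta>_def Suc_diff_le)
    show ?thesis
      by (simp only: L_Gt lookup_add_simp a b) (simp add: algebra_simps)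
  qed
  have "lk (dd X (Lp q (Suc m))) w = (\<Sum>j\<le>Suc m. cc q j * (qint q 2 * (if j = 0 then 0 else \<alpha> (j-1)) + 1 * (if j = Suc m then 0 else \<beta> j)
       - 0 * (if j = 0 then 0 else \<beta> (j-1))))"
    unfolding Lp_def dd_sum dd_scal lookup_sum_simp lookup_scal
    by (rule sum.cong[OF refl]) (simp only: atMost_iff tm)
  also have "\<dots> = (\<Sum>j\<le>m. cc q j * (- q * qint q 2 * \<alpha> j + (1 + q * 0) * \<beta> j))"
    by (rule sum_shift_G1) (rule cc_Suc)
  also have "\<dots> = lk (scal (- q) (Psi3 q 0 m)) w"
    unfolding Psi3_def \<alpha>_def \<beta>_def using q
    by (simp add: sum_distrib_left algebra_simps qint_1 power_int_minus qinv_cancel)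
  finally show "lk (dd X (Lp q (Suc m))) w = lk (scal (- q) (Psi3 q 0 m)) w" .
qed

lemma Lp_main:
  assumes q: "q \<noteq> 0" "q * q \<noteq> 1"
  shows "Lp q n = Wpos n \<and> (\<forall>k. Psi3 q k n = 0)"
proof (induction n)
  case 0
  have L: "Lp q 0 = Wpos 0" by (rule Lp_0)
  have "Psi3 q k 0 = 0" for k
  proof (induction k)
    case 0 show ?case
      by (rule vV_ext) (simp_all only: Psi3_Nil Psi3_dX_0 Psi3_dY_0[OF q] L diff_self scal_0 dd_zero lookup_zero)
  next
    case (Suc k) show ?case
      by (rule vV_ext) (simp_all only: Psi3_Nil Psi3_dX_0 Psi3_dY_Suc[OF q] Suc.IH scal_0 dd_zero lookup_zero)
  qed
  then show ?case using L by simp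
next
  case (Suc M)
  then have IH1: "Lp q M = Wpos M" and IH2: "\<And>k. Psi3 q k M = 0" by simp_all
  have L: "Lp q (Suc M) = Wpos (Suc M)"
    by (rule vV_ext) (simp_all only: Lp_Nil lk_Wpos_Nil Lp_dX[OF q] IH2 scal_0 dX_Wpos Lp_dY dY_Wpos)
  have "Psi3 q k (Suc M) = 0" for k
  proof (induction k)
    case 0 show ?case
      by (rule vV_ext) (simp_all only: Psi3_Nil Psi3_dX_Suc[OF q] IH2 Psi3_dY_0[OF q] L diff_self scal_0 dd_zero lookup_zero)
  next
    case (Suc k) show ?case
      by (rule vV_ext) (simp_all only: Psi3_Nil Psi3_dX_Suc[OF q] IH2 Psi3_dY_Suc[OF q] Suc.IH scal_0 dd_zero lookup_zero)
  qed
  then show ?case using L by simp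
qed



lemma pp_eq_sl: "(\<Sum>c\<leftarrow>u. pairing c b) = 2 * sl u * lval b"
  using pp_sl[of u b] by (simp add: pp_def)

lemma qsh_swap:
  fixes q :: "'a::field"
  shows "q \<noteq> 0 \<Longrightarrow> qsh q u v = scal (q powi (2 * sl u * sl v)) (qsh (inverse q) v u)"
proof (induction q u v rule: qsh.induct)
  case (1 q v) then show ?case by simp
next
  case (2 q a u) then show ?case by simp
next
  case (3 q a u b v)
  note q = "3.prems"
  have IH1: "qsh q u (b # v) = scal (q powi (2 * sl u * sl (b # v))) (qsh (inverse q) (b # v) u)"
    using "3.IH"(1) q .
  have IH2: "qsh q (a # u) v = scal (q powi (2 * sl (a # u) * sl v)) (qsh (inverse q) v (a # u))"
    using "3.IH"(2) q .
  have e1: "q powi (2 * sl u * sl (b # v)) = q powi (2 * sl (a # u) * sl (b # v)) * inverse q powi (2 * sl (b # v) * lval a)"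
  proof -
    have "2 * sl u * sl (b # v) = 2 * sl (a # u) * sl (b # v) - 2 * sl (b # v) * lval a"
      by (simp add: algebra_simps)
    then show ?thesis using q by (simp add: power_int_diff power_int_inverse divide_inverse)
  qed
  have e2: "q powi (2 * sl (a # u) * lval b) * q powi (2 * sl (a # u) * sl v) = q powi (2 * sl (a # u) * sl (b # v))"
  proof -
    have "2 * sl (a # u) * sl (b # v) = 2 * sl (a # u) * lval b + 2 * sl (a # u) * sl v"
      by (simp add: algebra_simps)
    then show ?thesis using q by (simp add: power_int_add)
  qed
  have "qsh q (a # u) (b # v) = pref a (qsh q u (b # v)) + scal (q powi (2 * sl (a # u) * lval b)) (pref b (qsh q (a # u) v))"
    by (simp only: qsh.simps(3) pp_eq_sl)
  also have "\<dots> = scal (q powi (2 * sl u * sl (b # v))) (pref a (qsh (inverse q) (b # v) u))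
      + scal (q powi (2 * sl (a # u) * lval b) * q powi (2 * sl (a # u) * sl v)) (pref b (qsh (inverse q) v (a # u)))"
    by (simp only: IH1 IH2 pref_scal scal_scal)
  also have "\<dots> = scal (q powi (2 * sl (a # u) * sl (b # v))) (pref b (qsh (inverse q) v (a # u)))
      + scal (q powi (2 * sl (a # u) * sl (b # v)) * inverse q powi (2 * sl (b # v) * lval a)) (pref a (qsh (inverse q) (b # v) u))"
    by (simp only: e1 e2) (rule add.commute)
  also have "\<dots> = scal (q powi (2 * sl (a # u) * sl (b # v))) (qsh (inverse q) (b # v) (a # u))"
    by (simp only: qsh.simps(3) pp_eq_sl scal_add scal_scal)
  finally show ?case .
qed

lemma lin_ext_swap: "lin_ext (\<lambda>u. lin_ext (\<lambda>v. H u v) g) f = lin_ext (\<lambda>v. lin_ext (\<lambda>u. H u v) f) g"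
proof -
  have "lin_ext (\<lambda>u. lin_ext (\<lambda>v. H u v) g) f = (\<Sum>u\<in>ks f. \<Sum>v\<in>ks g. scal (lk f u * lk g v) (H u v))"
    by (simp add: lin_ext_def scal_sum)
  also have "\<dots> = (\<Sum>v\<in>ks g. \<Sum>u\<in>ks f. scal (lk g v * lk f u) (H u v))"
    by (subst sum.swap) (simp add: mult.commute)
  also have "\<dots> = lin_ext (\<lambda>v. lin_ext (\<lambda>u. H u v) f) g"
    by (simp add: lin_ext_def scal_sum)
  finally show ?thesis .
qed

lemma star_swap:
  fixes q :: "'a::field"
  assumes q: "q \<noteq> 0" and k: "\<And>u v. u \<in> ks f \<Longrightarrow> v \<in> ks g \<Longrightarrow> 2 * sl u * sl v = k"
  shows "star q f g = scal (q powi k) (star (inverse q) g f)"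
proof -
  have "star q f g = lin_ext (\<lambda>u. lin_ext (\<lambda>v. scal (q powi k) (qsh (inverse q) v u)) g) f"
    unfolding star_def
    by (rule lin_ext_cong, rule lin_ext_cong) (simp add: qsh_swap[OF q] k)
  also have "\<dots> = scal (q powi k) (lin_ext (\<lambda>v. lin_ext (\<lambda>u. qsh (inverse q) v u) f) g)"
    by (simp add: lin_ext_F_scal lin_ext_swap[of "\<lambda>u v. qsh (inverse q) v u"])
  finally show ?thesis by (simp add: star_def)
qed

lemma qint_inv: "qint (inverse q) m = qint q m"
proof (cases "q = 0")
  case True then show ?thesis by (simp add: qint_def)
next
  case False
  then show ?thesis unfolding qint_def
    by (simp add: power_int_inverse power_int_minus divide_inverse) (simp add: field_simps, metis minus_diff_eq minus_divide_divide)
qed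

lemma Cat_inv: "Cat (inverse q) n = Cat q n"
  by (simp add: Cat_def qint_inv)

lemma part1:
  assumes q: "q \<noteq> 0" "q * q \<noteq> 1"
  shows "Wneg n = (\<Sum>i\<le>n. scal ((-1) ^ i * q ^ i) (star q (cat (wd [X]) (Cat q i)) (Gt (n - i))))"
  using Lq_Wneg[OF q, of n] by (simp add: Lq_def cc_def Cat_DD[OF q])

lemma part3:
  assumes q: "q \<noteq> 0" "q * q \<noteq> 1"
  shows "Wpos n = (\<Sum>i\<le>n. scal ((-1) ^ i * q ^ i) (star q (Gt (n - i)) (cat (Cat q i) (wd [Y]))))"
  using Lp_main[OF q, of n] by (simp add: Lp_def cc_def Cat_DD[OF q] EE_def)

lemma keys_Gt_sl: "v \<in> ks (Gt m) \<Longrightarrow> sl v = 0"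
  by (simp add: Gt_def sl_alt_X)

theorem theorem11p5:
  fixes q :: "'a::field" and n :: nat
  assumes "q \<noteq> 0"
    and "\<And>m::nat. m \<ge> 1 \<Longrightarrow> q ^ m \<noteq> 1"
  shows "(Wneg n = (\<Sum>i\<le>n. scal ((-1) ^ i * q ^ i)
                     (star q (cat (wd [X]) (Cat q i)) (Gt (n - i)))))
    \<and> (Wneg n = (\<Sum>i\<le>n. scal ((-1) ^ i * q powi (- int i))
                     (star q (Gt (n - i)) (cat (wd [X]) (Cat q i)))))
    \<and> (Wpos n = (\<Sum>i\<le>n. scal ((-1) ^ i * q ^ i)
                     (star q (Gt (n - i)) (cat (Cat q i) (wd [Y])))))
    \<and> (Wpos n = (\<Sum>i\<le>n. scal ((-1) ^ i * q powi (- int i))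
                     (star q (cat (Cat q i) (wd [Y])) (Gt (n - i)))))"
proof -
  have q2: "q * q \<noteq> 1" using assms(2)[of 2] by (simp add: power2_eq_square)
  have q: "q \<noteq> 0" by (rule assms(1))
  have iq: "inverse q \<noteq> 0" "inverse q * inverse q \<noteq> 1"
    using q q2 by (auto simp: field_simps)
  have pw: "inverse q ^ i = q powi (- int i)" for i
    by (simp add: power_int_minus power_inverse)
  have sw1: "star (inverse q) (cat (wd [X]) (Cat q i)) (Gt m) = star q (Gt m) (cat (wd [X]) (Cat q i))" for i m
  proof -
    have "star (inverse q) (cat (wd [X]) (Cat q i)) (Gt m) = scal (inverse q powi 0) (star (inverse (inverse q)) (Gt m) (cat (wd [X]) (Cat q i)))"
      by (rule star_swap[OF iq(1)]) (simp add: keys_Gt_sl)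
    then show ?thesis by simp
  qed
  have sw2: "star (inverse q) (Gt m) (cat (Cat q i) (wd [Y])) = star q (cat (Cat q i) (wd [Y])) (Gt m)" for i m
  proof -
    have "star (inverse q) (Gt m) (cat (Cat q i) (wd [Y])) = scal (inverse q powi 0) (star (inverse (inverse q)) (cat (Cat q i) (wd [Y])) (Gt m))"
      by (rule star_swap[OF iq(1)]) (simp add: keys_Gt_sl)
    then show ?thesis by simp
  qed
  have A: "Wneg n = (\<Sum>i\<le>n. scal ((-1) ^ i * q powi (- int i)) (star q (Gt (n - i)) (cat (wd [X]) (Cat q i))))"
    using part1[OF iq, of n] by (simp add: Cat_inv pw sw1)
  have B: "Wpos n = (\<Sum>i\<le>n. scal ((-1) ^ i * q powi (- int i)) (star q (cat (Cat q i) (wd [Y])) (Gt (n - i))))"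
    using part3[OF iq, of n] by (simp add: Cat_inv pw sw2)
  show ?thesis using part1[OF q q2, of n] part3[OF q q2, of n] A B by blast
qed


end
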